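(* Let the non-degeneracy, balanced communication and periodic strong connectivity assumptions hold, and let the positive step-sizes of the DLPDS algorithm satisfy $\lim_{k\to\infty}\alpha(k)=0$, $\sum_k\alpha(k)=+\infty$, $\sum_k\alpha(k)^2<+\infty$. Suppose $x^*\in X$ and $\mu^*\in M$ satisfy $\lim_{k\to\infty}x^{[i]}(k)=x^*$ and $\lim_{k\to\infty}\mu^{[i]}(k)=\mu^*$ for all $i\in V$. Then $(x^*,\mu^* )$ is a saddle point of $\mathcal{L}(x,\mu)=f(x)+N\mu^Tg(x)$ over $X\times M$, i.e. $\mathcal{L}(x^*,\mu)\le\mathcal{L}(x^*,\mu^* )\le\mathcal{L}(x,\mu^* )$ for all $x\in X$, $\mu\in M$.
   Context: Same setting and DLPDS algorithm as follows. Agents $V=\{1,\dots,N\}$; convex $f^{[i]}$, $f=\sum_if^{[i]}$; nonempty compact convex $X^{[i]}$, $X=\bigcap_iX^{[i]}$; $g:\mathbb{R}^n\to\mathbb{R}^m$ with convex components; $M^{[i]}=\{\mu\in\mathbb{R}^m_{\ge0}:\|\mu\|\le\rho_i\}$, $\rho_i>0$, $M=\bigcap_iM^{[i]}$; $\mathcal{L}^{[i]}(x,\mu)=f^{[i]}(x)+\mu^Tg(x)$. Weights $a^i_j(k)\ge0$ satisfying non-degeneracy ($a^i_i(k)\ge\eta>0$, $a^i_j(k)\in\{0\}\cup[\eta,1]$), double stochasticity, and periodic strong connectivity (union of edge sets $\{(j,i):j\neq i,a^i_j(k)>0\}$ over any $B$ consecutive times is strongly connected). Iteration: $v^{[i]}_x(k)=\sum_ja^i_j(k)x^{[j]}(k)$,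 $v^{[i]}_\mu(k)=\sum_ja^i_j(k)\mu^{[j]}(k)$, $x^{[i]}(k+1)=P_{X^{[i]}}[v^{[i]}_x(k)-\alpha(k)\mathcal{D}^{[i]}_x(k)]$, $\mu^{[i]}(k+1)=P_{M^{[i]}}[v^{[i]}_\mu(k)+\alpha(k)g(v^{[i]}_x(k))]$, with $x^{[i]}(0)\in X^{[i]}$, $\mu^{[i]}(0)\ge0$, and $\mathcal{D}^{[i]}_x(k)$ a subgradient of $\mathcal{L}^{[i]}(\cdot,v^{[i]}_\mu(k))$ at $v^{[i]}_x(k)$. *)

theory Defs
  imports "HOL-Analysis.Analysis"
begin

definition is_subgradient :: "('a::real_inner \<Rightarrow> real) \<Rightarrow> 'a \<Rightarrow> 'a \<Rightarrow> bool" where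
  "is_subgradient h x d \<longleftrightarrow> (\<forall>y. h y \<ge> h x + d \<bullet> (y - x))"

definition nonneg_orthant :: "(real^'m) set" where
  "nonneg_orthant = {mu. \<forall>j. 0 \<le> mu $ j}"

abbreviation proj :: "('a::euclidean_space) set \<Rightarrow> 'a \<Rightarrow> 'a" where
  "proj S y \<equiv> closest_point S y"

end

theory Submission
  imports Defs
begin


lemma descent_contra:
  fixes V \<alpha> :: "nat \<Rightarrow> real"
  assumes dec: "\<And>k. k \<ge> K \<Longrightarrow> V (Suc k) \<le> V k - \<alpha> k * c"
    and c: "c > 0" and V0: "\<And>k. V k \<ge> 0" and ap: "\<And>k. \<alpha> k > 0"
    and ns: "\<not> summable \<alpha>"
  shows False
proof -
  have ind: "V (K + n) \<le> V K - c * (\<Sum>k<n. \<alpha> (k + K))" for n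
  proof (induction n)
    case 0 then show ?case by simp
  next
    case (Suc n)
    have "V (K + Suc n) \<le> V (K + n) - \<alpha> (K + n) * c" using dec[of "K+n"] by simp
    with Suc show ?case by (simp add: algebra_simps)
  qed
  have "summable (\<lambda>k. \<alpha> (k + K))"
  proof (rule bounded_imp_summable)
    show "0 \<le> \<alpha> (n + K)" for n using ap[of "n+K"] by simp
    show "(\<Sum>k\<le>n. \<alpha> (k + K)) \<le> V K / c" for n
    proof -
      have "c * (\<Sum>k<Suc n. \<alpha> (k + K)) \<le> V K" using ind[of "Suc n"] V0[of "K + Suc n"] by linarith
      then show ?thesis using c by (simp add: lessThan_Suc_atMost field_simps)
    qed
  qed
  then show False using ns by simp
qed

lemma mix_norm:
  fixes y :: "nat \<Rightarrow> 'a::real_normed_vector" and a :: "nat \<Rightarrow> nat \<Rightarrow> real"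
  assumes a0: "\<And>i j. i < N \<Longrightarrow> j < N \<Longrightarrow> a i j \<ge> 0"
    and row: "\<And>i. i < N \<Longrightarrow> (\<Sum>j<N. a i j) = 1"
    and col: "\<And>j. j < N \<Longrightarrow> (\<Sum>i<N. a i j) = 1"
  shows "(\<Sum>i<N. (norm (\<Sum>j<N. a i j *\<^sub>R y j))\<^sup>2) \<le> (\<Sum>j<N. (norm (y j))\<^sup>2)"
proof -
  have one: "(norm (\<Sum>j<N. a i j *\<^sub>R y j))\<^sup>2 \<le> (\<Sum>j<N. a i j * (norm (y j))\<^sup>2)" if i: "i < N" for i
  proof -
    have "norm (\<Sum>j<N. a i j *\<^sub>R y j) \<le> (\<Sum>j<N. norm (a i j *\<^sub>R y j))" by (rule norm_sum)
    also have "\<dots> = (\<Sum>j<N. a i j * norm (y j))" using a0 i by (intro sum.cong) auto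
    finally have h1: "norm (\<Sum>j<N. a i j *\<^sub>R y j) \<le> (\<Sum>j<N. a i j * norm (y j))" .
    have "(\<Sum>j<N. a i j * norm (y j)) = (\<Sum>j<N. a i j *\<^sub>R norm (y j))" by simp
    have h2: "(\<Sum>j<N. a i j *\<^sub>R norm (y j))\<^sup>2 \<le> (\<Sum>j<N. a i j * (norm (y j))\<^sup>2)"
      using convex_on_sum[where S="{..<N}" and f="\<lambda>x::real. x^2" and C=UNIV and a="a i" and y="\<lambda>j. norm (y j)", OF _ _ convex_power_even]
        i a0 row by auto
    have "(norm (\<Sum>j<N. a i j *\<^sub>R y j))\<^sup>2 \<le> (\<Sum>j<N. a i j * norm (y j))\<^sup>2"
      using h1 by (intro power_mono) auto
    then show ?thesis using h2 by simp
  qed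
  have "(\<Sum>i<N. (norm (\<Sum>j<N. a i j *\<^sub>R y j))\<^sup>2) \<le> (\<Sum>i<N. \<Sum>j<N. a i j * (norm (y j))\<^sup>2)"
    by (rule sum_mono) (use one in auto)
  also have "\<dots> = (\<Sum>j<N. \<Sum>i<N. a i j * (norm (y j))\<^sup>2)" by (rule sum.swap)
  also have "\<dots> = (\<Sum>j<N. (norm (y j))\<^sup>2)"
    by (intro sum.cong) (auto simp: sum_distrib_right[symmetric] col)
  finally show ?thesis .
qed

lemma key:
  fixes z v :: "nat \<Rightarrow> nat \<Rightarrow> 'a::real_normed_vector" and w :: 'a
    and e :: "nat \<Rightarrow> nat \<Rightarrow> real" and E :: "nat \<Rightarrow> real" and \<alpha> :: "nat \<Rightarrow> real"
  assumes per: "\<And>i k. i < N \<Longrightarrow> (norm (z i (Suc k) - w))\<^sup>2 \<le> (norm (v i k - w))\<^sup>2 + \<alpha> k * e i k"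
    and mix: "\<And>k. (\<Sum>i<N. (norm (v i k - w))\<^sup>2) \<le> (\<Sum>i<N. (norm (z i k - w))\<^sup>2)"
    and lim: "\<And>i. i < N \<Longrightarrow> (\<lambda>k. e i k) \<longlonglongrightarrow> E i"
    and neg: "(\<Sum>i<N. E i) < 0"
    and ap: "\<And>k. \<alpha> k > 0" and ns: "\<not> summable \<alpha>"
  shows False
proof -
  have "(\<lambda>k. \<Sum>i<N. e i k) \<longlonglongrightarrow> (\<Sum>i<N. E i)" by (rule tendsto_sum) (use lim in auto)
  moreover have "(\<Sum>i<N. E i) < (\<Sum>i<N. E i) / 2" using neg by simp
  ultimately have "eventually (\<lambda>k. (\<Sum>i<N. e i k) < (\<Sum>i<N. E i) / 2) sequentially"
    by (rule order_tendstoD)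
  then obtain K where K: "\<And>k. k \<ge> K \<Longrightarrow> (\<Sum>i<N. e i k) < (\<Sum>i<N. E i) / 2"
    unfolding eventually_sequentially by blast
  define V where "V k = (\<Sum>i<N. (norm (z i k - w))\<^sup>2)" for k
  show False
  proof (rule descent_contra[of K V \<alpha> "- (\<Sum>i<N. E i) / 2"])
    fix k assume k: "k \<ge> K"
    have "V (Suc k) \<le> (\<Sum>i<N. (norm (v i k - w))\<^sup>2 + \<alpha> k * e i k)"
      unfolding V_def by (rule sum_mono) (use per in auto)
    also have "\<dots> = (\<Sum>i<N. (norm (v i k - w))\<^sup>2) + \<alpha> k * (\<Sum>i<N. e i k)"
      by (simp add: sum.distrib sum_distrib_left)
    also have "\<dots> \<le> V k + \<alpha> k * ((\<Sum>i<N. E i) / 2)"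
      using mix[of k] K[OF k] ap[of k] unfolding V_def
      by (intro add_mono mult_left_mono) auto
    finally show "V (Suc k) \<le> V k - \<alpha> k * (- (\<Sum>i<N. E i) / 2)" by simp
  qed (use neg ap ns in \<open>auto simp: V_def intro: sum_nonneg\<close>)
qed

lemma norm_add_scale_sq:
  fixes u q :: "'a::real_inner"
  shows "(norm (u + c *\<^sub>R q))\<^sup>2 = (norm u)\<^sup>2 + 2 * c * (q \<bullet> u) + c\<^sup>2 * (norm q)\<^sup>2"
  unfolding power2_norm_eq_inner by (simp add: inner_add inner_commute algebra_simps power2_eq_square)

lemma proj_nonexp:
  fixes S :: "'a::euclidean_space set"
  assumes "convex S" "closed S" "w \<in> S"
  shows "norm (closest_point S y - w) \<le> norm (y - w)"
  using closest_point_lipschitz[OF assms(1,2), of y w] closest_point_self[OF assms(3)] assms(3)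
  by (auto simp: dist_norm)

lemma mix_lim:
  fixes y :: "nat \<Rightarrow> nat \<Rightarrow> 'a::real_normed_vector" and a :: "nat \<Rightarrow> nat \<Rightarrow> real"
  assumes a0: "\<And>j k. j < N \<Longrightarrow> a j k \<ge> 0" and a1: "\<And>j k. j < N \<Longrightarrow> a j k \<le> 1"
    and row: "\<And>k. (\<Sum>j<N. a j k) = 1"
    and lim: "\<And>j. j < N \<Longrightarrow> (\<lambda>k. y j k) \<longlonglongrightarrow> l"
  shows "(\<lambda>k. \<Sum>j<N. a j k *\<^sub>R y j k) \<longlonglongrightarrow> l"
proof -
  have eq: "(\<Sum>j<N. a j k *\<^sub>R y j k) - l = (\<Sum>j<N. a j k *\<^sub>R (y j k - l))" for k
  proof -
    have "(\<Sum>j<N. a j k *\<^sub>R (y j k - l)) = (\<Sum>j<N. a j k *\<^sub>R y j k) - (\<Sum>j<N. a j k) *\<^sub>R l"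
      by (simp add: scaleR_diff_right sum_subtractf scaleR_sum_left)
    then show ?thesis using row by simp
  qed
  have "(\<lambda>k. (\<Sum>j<N. a j k *\<^sub>R y j k) - l) \<longlonglongrightarrow> 0"
  proof (rule Lim_null_comparison)
    show "\<forall>\<^sub>F k in sequentially. norm ((\<Sum>j<N. a j k *\<^sub>R y j k) - l) \<le> (\<Sum>j<N. norm (y j k - l))"
    proof (rule always_eventually, intro allI)
      fix k
      have "norm ((\<Sum>j<N. a j k *\<^sub>R y j k) - l) \<le> (\<Sum>j<N. norm (a j k *\<^sub>R (y j k - l)))"
        unfolding eq by (rule norm_sum)
      also have "\<dots> \<le> (\<Sum>j<N. norm (y j k - l))"
        using a0 a1 by (intro sum_mono) (auto intro: mult_left_le_one_le)
      finally show "norm ((\<Sum>j<N. a j k *\<^sub>R y j k) - l) \<le> (\<Sum>j<N. norm (y j k - l))" .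
    qed
    have "(\<lambda>k. \<Sum>j<N. norm (y j k - l)) \<longlonglongrightarrow> (\<Sum>j<N. norm (l - l))"
      by (intro tendsto_intros) (auto intro: lim)
    then show "(\<lambda>k. \<Sum>j<N. norm (y j k - l)) \<longlonglongrightarrow> 0" by simp
  qed
  then show ?thesis by (simp add: LIM_zero_iff)
qed



lemma orthant_closed: "closed (nonneg_orthant :: (real^'m) set)"
  unfolding nonneg_orthant_def by (intro closed_Collect_all closed_Collect_le continuous_intros)

lemma orthant_convex: "convex (nonneg_orthant :: (real^'m) set)"
  unfolding convex_def nonneg_orthant_def by auto

lemma Ms_props:
  fixes r :: real
  shows "closed {mu \<in> (nonneg_orthant :: (real^'m) set). norm mu \<le> r}"
    and "convex {mu \<in> (nonneg_orthant :: (real^'m) set). norm mu \<le> r}"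
proof -
  have eq: "{mu \<in> (nonneg_orthant :: (real^'m) set). norm mu \<le> r} = nonneg_orthant \<inter> cball 0 r"
    by auto
  show "closed {mu \<in> (nonneg_orthant :: (real^'m) set). norm mu \<le> r}"
    unfolding eq by (intro closed_Int orthant_closed closed_cball)
  show "convex {mu \<in> (nonneg_orthant :: (real^'m) set). norm mu \<le> r}"
    unfolding eq by (intro convex_Int orthant_convex convex_cball)
qed

lemma subgrad_bound:
  fixes h :: "'a::real_inner \<Rightarrow> real"
  assumes sg: "is_subgradient h x d" and F: "\<And>y. norm (y - x) \<le> 1 \<Longrightarrow> \<bar>h y\<bar> \<le> F"
  shows "norm d \<le> 2 * F"
proof (cases "d = 0")
  case True
  have "\<bar>h x\<bar> \<le> F" using F[of x] by simp
  then show ?thesis using True by simp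
next
  case False
  define y where "y = x + (1 / norm d) *\<^sub>R d"
  have ny: "norm (y - x) \<le> 1" using False by (simp add: y_def)
  have "d \<bullet> (y - x) = norm d" using False
    by (simp add: y_def power2_norm_eq_inner[symmetric] power2_eq_square)
  moreover have "h y \<ge> h x + d \<bullet> (y - x)" using sg unfolding is_subgradient_def by blast
  moreover have "\<bar>h x\<bar> \<le> F" using F[of x] by simp
  moreover have "\<bar>h y\<bar> \<le> F" using F[OF ny] .
  ultimately show ?thesis by linarith
qed



theorem mainTheorem8:
  fixes N :: nat and B :: nat and \<eta> :: real
    and f :: "nat \<Rightarrow> real^'n \<Rightarrow> real"
    and Xs :: "nat \<Rightarrow> (real^'n) set"
    and g :: "real^'n \<Rightarrow> real^'m"
    and \<rho> :: "nat \<Rightarrow> real"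
    and a :: "nat \<Rightarrow> nat \<Rightarrow> nat \<Rightarrow> real"
    and \<alpha> :: "nat \<Rightarrow> real"
    and x :: "nat \<Rightarrow> nat \<Rightarrow> real^'n"
    and \<mu> :: "nat \<Rightarrow> nat \<Rightarrow> real^'m"
    and D :: "nat \<Rightarrow> nat \<Rightarrow> real^'n"
    and xstar :: "real^'n" and mustar :: "real^'m"
  defines "X \<equiv> (\<Inter>i<N. Xs i)"
    and "Ms \<equiv> (\<lambda>i. {mu \<in> nonneg_orthant. norm mu \<le> \<rho> i})"
  defines "M \<equiv> (\<Inter>i<N. Ms i)"
    and "vx \<equiv> (\<lambda>i k. \<Sum>j<N. a i j k *\<^sub>R x j k)"
    and "vmu \<equiv> (\<lambda>i k. \<Sum>j<N. a i j k *\<^sub>R \<mu> j k)"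
    and "L \<equiv> (\<lambda>xx mu. (\<Sum>i<N. f i xx) + real N * (mu \<bullet> g xx))"
  assumes N_pos: "N \<ge> 1"
    and f_convex: "\<And>i. i < N \<Longrightarrow> convex_on UNIV (f i)"
    and X_compact: "\<And>i. i < N \<Longrightarrow> compact (Xs i)"
    and X_convex: "\<And>i. i < N \<Longrightarrow> convex (Xs i)"
    and X_nonempty: "\<And>i. i < N \<Longrightarrow> Xs i \<noteq> {}"
    and g_convex: "\<And>l. convex_on UNIV (\<lambda>y. g y $ l)"
    and rho_pos: "\<And>i. i < N \<Longrightarrow> \<rho> i > 0"
    \<comment> \<open>non-degeneracy\<close>
    and eta_pos: "\<eta> > 0"
    and a_nonneg: "\<And>i j k. i < N \<Longrightarrow> j < N \<Longrightarrow> a i j k \<ge> 0"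
    and a_diag: "\<And>i k. i < N \<Longrightarrow> a i i k \<ge> \<eta>"
    and a_range: "\<And>i j k. i < N \<Longrightarrow> j < N \<Longrightarrow> a i j k = 0 \<or> (\<eta> \<le> a i j k \<and> a i j k \<le> 1)"
    \<comment> \<open>balanced communication (double stochasticity)\<close>
    and a_row: "\<And>i k. i < N \<Longrightarrow> (\<Sum>j<N. a i j k) = 1"
    and a_col: "\<And>j k. j < N \<Longrightarrow> (\<Sum>i<N. a i j k) = 1"
    \<comment> \<open>periodic strong connectivity\<close>
    and B_pos: "B \<ge> 1"
    and strong_conn: "\<And>k. \<forall>i<N. \<forall>j<N. (i, j) \<in>
         {(j', i'). j' < N \<and> i' < N \<and> j' \<noteq> i' \<and> (\<exists>s\<in>{k..<k+B}. a i' j' s > 0)}\<^sup>*"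
    \<comment> \<open>step sizes\<close>
    and alpha_pos: "\<And>k. \<alpha> k > 0"
    and alpha_lim: "\<alpha> \<longlonglongrightarrow> 0"
    and alpha_not_summable: "\<not> summable \<alpha>"
    and alpha_sq_summable: "summable (\<lambda>k. (\<alpha> k)\<^sup>2)"
    \<comment> \<open>DLPDS algorithm\<close>
    and x_init: "\<And>i. i < N \<Longrightarrow> x i 0 \<in> Xs i"
    and mu_init: "\<And>i. i < N \<Longrightarrow> \<mu> i 0 \<in> nonneg_orthant"
    and D_subgrad: "\<And>i k. i < N \<Longrightarrow>
         is_subgradient (\<lambda>y. f i y + vmu i k \<bullet> g y) (vx i k) (D i k)"
    and x_step: "\<And>i k. i < N \<Longrightarrow>
         x i (Suc k) = closest_point (Xs i) (vx i k - \<alpha> k *\<^sub>R D i k)"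
    and mu_step: "\<And>i k. i < N \<Longrightarrow>
         \<mu> i (Suc k) = closest_point (Ms i) (vmu i k + \<alpha> k *\<^sub>R g (vx i k))"
    \<comment> \<open>convergence to a common limit\<close>
    and xstar_in: "xstar \<in> X"
    and mustar_in: "mustar \<in> M"
    and x_lim: "\<And>i. i < N \<Longrightarrow> (\<lambda>k. x i k) \<longlonglongrightarrow> xstar"
    and mu_lim: "\<And>i. i < N \<Longrightarrow> (\<lambda>k. \<mu> i k) \<longlonglongrightarrow> mustar"
  shows "(\<forall>mu\<in>M. L xstar mu \<le> L xstar mustar) \<and> (\<forall>xx\<in>X. L xstar mustar \<le> L xx mustar)"
proof -
  have a1: "a i j k \<le> 1" if "i < N" "j < N" for i j k
    using a_range[OF that, of k] eta_pos by auto
  have vx_lim: "(\<lambda>k. vx i k) \<longlonglongrightarrow> xstar" if i: "i < N" for i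
    unfolding vx_def using a_nonneg[OF i] a1[OF i] a_row[OF i] x_lim
    by (intro mix_lim[where a="\<lambda>j k. a i j k"]) auto
  have vmu_lim: "(\<lambda>k. vmu i k) \<longlonglongrightarrow> mustar" if i: "i < N" for i
    unfolding vmu_def using a_nonneg[OF i] a1[OF i] a_row[OF i] mu_lim
    by (intro mix_lim[where a="\<lambda>j k. a i j k"]) auto
  have fcont: "continuous_on UNIV (f i)" if "i < N" for i
    by (rule convex_on_continuous) (use f_convex[OF that] in auto)
  have gcont: "continuous_on UNIV g"
  proof -
    have "continuous_on UNIV (\<lambda>y. \<chi> l. g y $ l)"
      by (intro continuous_on_vec_lambda allI convex_on_continuous) (use g_convex in auto)
    then show ?thesis by simp
  qed
  have fisc: "isCont (f i) y" if "i < N" for i y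
    using fcont[OF that] by (simp add: continuous_on_eq_continuous_at)
  have gisc: "isCont g y" for y
    using gcont by (simp add: continuous_on_eq_continuous_at)
  have Ms_cl: "closed (Ms i)" and Ms_cv: "convex (Ms i)" for i
    unfolding Ms_def using Ms_props by auto
  have Xs_cl: "closed (Xs i)" if "i < N" for i using X_compact[OF that] by (rule compact_imp_closed)
  have part1: "L xstar w \<le> L xstar mustar" if w: "w \<in> M" for w
  proof (rule ccontr)
    assume "\<not> L xstar w \<le> L xstar mustar"
    then have "real N * (mustar \<bullet> g xstar) < real N * (w \<bullet> g xstar)" by (simp add: L_def)
    then have gt: "mustar \<bullet> g xstar < w \<bullet> g xstar" using N_pos by (simp add: mult_less_cancel_left)
    have wMs: "w \<in> Ms i" if "i < N" for i using w that unfolding M_def by auto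
    show False
    proof (rule key[where z=\<mu> and v=vmu and w=w and N=N and \<alpha>=\<alpha>
          and e="\<lambda>i k. 2 * (g (vx i k) \<bullet> (vmu i k - w)) + \<alpha> k * (norm (g (vx i k)))\<^sup>2"
          and E="\<lambda>i. 2 * (g xstar \<bullet> (mustar - w))"])
      fix i k assume i: "i < N"
      have "norm (\<mu> i (Suc k) - w) \<le> norm (vmu i k + \<alpha> k *\<^sub>R g (vx i k) - w)"
        unfolding mu_step[OF i] by (rule proj_nonexp[OF Ms_cv Ms_cl wMs[OF i]])
      then have "(norm (\<mu> i (Suc k) - w))\<^sup>2 \<le> (norm ((vmu i k - w) + \<alpha> k *\<^sub>R g (vx i k)))\<^sup>2"
        by (intro power_mono) (auto simp: algebra_simps)
      also have "\<dots> = (norm (vmu i k - w))\<^sup>2 + \<alpha> k * (2 * (g (vx i k) \<bullet> (vmu i k - w)) + \<alpha> k * (norm (g (vx i k)))\<^sup>2)"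
        unfolding norm_add_scale_sq by (simp add: algebra_simps power2_eq_square)
      finally show "(norm (\<mu> i (Suc k) - w))\<^sup>2 \<le> (norm (vmu i k - w))\<^sup>2 + \<alpha> k * (2 * (g (vx i k) \<bullet> (vmu i k - w)) + \<alpha> k * (norm (g (vx i k)))\<^sup>2)" .
    next
      fix k
      have eq: "vmu i k - w = (\<Sum>j<N. a i j k *\<^sub>R (\<mu> j k - w))" if i: "i < N" for i
      proof -
        have "(\<Sum>j<N. a i j k *\<^sub>R (\<mu> j k - w)) = vmu i k - (\<Sum>j<N. a i j k) *\<^sub>R w"
          unfolding vmu_def by (simp add: scaleR_diff_right sum_subtractf scaleR_sum_left)
        then show ?thesis using a_row[OF i] by simp
      qed
      have "(\<Sum>i<N. (norm (vmu i k - w))\<^sup>2) = (\<Sum>i<N. (norm (\<Sum>j<N. a i j k *\<^sub>R (\<mu> j k - w)))\<^sup>2)"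
        using eq by (intro sum.cong) auto
      also have "\<dots> \<le> (\<Sum>j<N. (norm (\<mu> j k - w))\<^sup>2)"
        by (rule mix_norm) (use a_nonneg a_row a_col in auto)
      finally show "(\<Sum>i<N. (norm (vmu i k - w))\<^sup>2) \<le> (\<Sum>i<N. (norm (\<mu> i k - w))\<^sup>2)" .
    next
      fix i assume i: "i < N"
      have "(\<lambda>k. 2 * (g (vx i k) \<bullet> (vmu i k - w)) + \<alpha> k * (norm (g (vx i k)))\<^sup>2)
          \<longlonglongrightarrow> 2 * (g xstar \<bullet> (mustar - w)) + 0 * (norm (g xstar))\<^sup>2"
        by (intro tendsto_intros isCont_tendsto_compose[OF gisc] vx_lim[OF i] vmu_lim[OF i] alpha_lim)
      then show "(\<lambda>k. 2 * (g (vx i k) \<bullet> (vmu i k - w)) + \<alpha> k * (norm (g (vx i k)))\<^sup>2)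
          \<longlonglongrightarrow> 2 * (g xstar \<bullet> (mustar - w))" by simp
    next
      have "g xstar \<bullet> (mustar - w) < 0" using gt by (simp add: inner_diff_right inner_commute)
      then show "(\<Sum>i<N. 2 * (g xstar \<bullet> (mustar - w))) < 0" using N_pos
        by (simp add: mult_pos_neg)
    qed (use alpha_pos alpha_not_summable in auto)
  qed
  have Dbound: "\<exists>C. \<forall>k. norm (D i k) \<le> C" if i: "i < N" for i
  proof -
    have "Bseq (\<lambda>k. vx i k)" using vx_lim[OF i] by (intro convergent_imp_Bseq convergentI)
    then obtain R where R: "\<And>k. norm (vx i k) \<le> R" by (metis BseqE)
    have "Bseq (\<lambda>k. vmu i k)" using vmu_lim[OF i] by (intro convergent_imp_Bseq convergentI)
    then obtain Mu where Mu: "\<And>k. norm (vmu i k) \<le> Mu" by (metis BseqE)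
    have "continuous_on (cball 0 (R + 1)) (f i)" using fcont[OF i] by (rule continuous_on_subset) simp
    then have "compact (f i ` cball 0 (R + 1))" by (intro compact_continuous_image compact_cball)
    then have "bounded (f i ` cball 0 (R + 1))" by (rule compact_imp_bounded)
    then obtain F where F0: "\<forall>z\<in>f i ` cball 0 (R + 1). norm z \<le> F" unfolding bounded_pos by metis
    have F: "norm (f i y) \<le> F" if "y \<in> cball 0 (R + 1)" for y using F0 that by blast
    have "continuous_on (cball 0 (R + 1)) g" using gcont by (rule continuous_on_subset) simp
    then have "compact (g ` cball 0 (R + 1))" by (intro compact_continuous_image compact_cball)
    then have "bounded (g ` cball 0 (R + 1))" by (rule compact_imp_bounded)
    then obtain G where G0: "\<forall>z\<in>g ` cball 0 (R + 1). norm z \<le> G" unfolding bounded_pos by metis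
    have G: "norm (g y) \<le> G" if "y \<in> cball 0 (R + 1)" for y using G0 that by blast
    have "norm (D i k) \<le> 2 * (F + Mu * G)" for k
    proof (rule subgrad_bound[OF D_subgrad[OF i]])
      fix y assume y: "norm (y - vx i k) \<le> 1"
      have "norm y \<le> norm (y - vx i k) + norm (vx i k)" using norm_triangle_sub[of y "vx i k"] by simp
      then have yc: "y \<in> cball 0 (R + 1)" using y R[of k] by (simp add: dist_norm)
      have "\<bar>vmu i k \<bullet> g y\<bar> \<le> norm (vmu i k) * norm (g y)" by (rule Cauchy_Schwarz_ineq2)
      also have "\<dots> \<le> Mu * G" using Mu[of k] G[OF yc] by (intro mult_mono) (auto intro: order_trans[OF norm_ge_zero])
      finally have "\<bar>vmu i k \<bullet> g y\<bar> \<le> Mu * G" .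
      moreover have "\<bar>f i y\<bar> \<le> F" using F[OF yc] by simp
      ultimately show "\<bar>f i y + vmu i k \<bullet> g y\<bar> \<le> F + Mu * G" by linarith
    qed
    then show ?thesis by blast
  qed
  have aD_lim: "(\<lambda>k. \<alpha> k * (norm (D i k))\<^sup>2) \<longlonglongrightarrow> 0" if i: "i < N" for i
  proof -
    obtain C where C: "\<And>k. norm (D i k) \<le> C" using Dbound[OF i] by blast
    show ?thesis
    proof (rule Lim_null_comparison)
      show "\<forall>\<^sub>F k in sequentially. norm (\<alpha> k * (norm (D i k))\<^sup>2) \<le> \<alpha> k * C\<^sup>2"
      proof (rule always_eventually, intro allI)
        fix k
        have "(norm (D i k))\<^sup>2 \<le> C\<^sup>2" using C[of k] by (intro power_mono) auto
        then show "norm (\<alpha> k * (norm (D i k))\<^sup>2) \<le> \<alpha> k * C\<^sup>2"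
          using alpha_pos[of k] by (simp add: abs_mult mult_left_mono)
      qed
      show "(\<lambda>k. \<alpha> k * C\<^sup>2) \<longlonglongrightarrow> 0" using tendsto_mult_left_zero[OF alpha_lim] by simp
    qed
  qed
  have part2: "L xstar mustar \<le> L xx mustar" if xx: "xx \<in> X" for xx
  proof (rule ccontr)
    assume "\<not> L xstar mustar \<le> L xx mustar"
    then have lt: "L xx mustar - L xstar mustar < 0" by simp
    have xXs: "xx \<in> Xs i" if "i < N" for i using xx that unfolding X_def by auto
    show False
    proof (rule key[where z=x and v=vx and w=xx and N=N and \<alpha>=\<alpha>
          and e="\<lambda>i k. 2 * ((f i xx + vmu i k \<bullet> g xx) - (f i (vx i k) + vmu i k \<bullet> g (vx i k))) + \<alpha> k * (norm (D i k))\<^sup>2"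
          and E="\<lambda>i. 2 * ((f i xx + mustar \<bullet> g xx) - (f i xstar + mustar \<bullet> g xstar))"])
      fix i k assume i: "i < N"
      have "norm (x i (Suc k) - xx) \<le> norm (vx i k - \<alpha> k *\<^sub>R D i k - xx)"
        unfolding x_step[OF i] by (rule proj_nonexp[OF X_convex[OF i] Xs_cl[OF i] xXs[OF i]])
      then have "(norm (x i (Suc k) - xx))\<^sup>2 \<le> (norm ((vx i k - xx) + (- \<alpha> k) *\<^sub>R D i k))\<^sup>2"
        by (intro power_mono) (auto simp: algebra_simps)
      also have "\<dots> = (norm (vx i k - xx))\<^sup>2 + \<alpha> k * (2 * (D i k \<bullet> (xx - vx i k))) + \<alpha> k * (\<alpha> k * (norm (D i k))\<^sup>2)"
        unfolding norm_add_scale_sq by (simp add: algebra_simps power2_eq_square inner_diff_right)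
      also have "\<dots> \<le> (norm (vx i k - xx))\<^sup>2 + \<alpha> k * (2 * ((f i xx + vmu i k \<bullet> g xx) - (f i (vx i k) + vmu i k \<bullet> g (vx i k)))) + \<alpha> k * (\<alpha> k * (norm (D i k))\<^sup>2)"
      proof -
        have "f i xx + vmu i k \<bullet> g xx \<ge> f i (vx i k) + vmu i k \<bullet> g (vx i k) + D i k \<bullet> (xx - vx i k)"
          using D_subgrad[OF i, of k] unfolding is_subgradient_def by blast
        then show ?thesis using alpha_pos[of k] by (intro add_mono mult_left_mono) auto
      qed
      finally show "(norm (x i (Suc k) - xx))\<^sup>2 \<le> (norm (vx i k - xx))\<^sup>2 + \<alpha> k * (2 * ((f i xx + vmu i k \<bullet> g xx) - (f i (vx i k) + vmu i k \<bullet> g (vx i k))) + \<alpha> k * (norm (D i k))\<^sup>2)"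
        by (simp add: algebra_simps)
    next
      fix k
      have eq: "vx i k - xx = (\<Sum>j<N. a i j k *\<^sub>R (x j k - xx))" if i: "i < N" for i
      proof -
        have "(\<Sum>j<N. a i j k *\<^sub>R (x j k - xx)) = vx i k - (\<Sum>j<N. a i j k) *\<^sub>R xx"
          unfolding vx_def by (simp add: scaleR_diff_right sum_subtractf scaleR_sum_left)
        then show ?thesis using a_row[OF i] by simp
      qed
      have "(\<Sum>i<N. (norm (vx i k - xx))\<^sup>2) = (\<Sum>i<N. (norm (\<Sum>j<N. a i j k *\<^sub>R (x j k - xx)))\<^sup>2)"
        using eq by (intro sum.cong) auto
      also have "\<dots> \<le> (\<Sum>j<N. (norm (x j k - xx))\<^sup>2)"
        by (rule mix_norm) (use a_nonneg a_row a_col in auto)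
      finally show "(\<Sum>i<N. (norm (vx i k - xx))\<^sup>2) \<le> (\<Sum>i<N. (norm (x i k - xx))\<^sup>2)" .
    next
      fix i assume i: "i < N"
      have "(\<lambda>k. 2 * ((f i xx + vmu i k \<bullet> g xx) - (f i (vx i k) + vmu i k \<bullet> g (vx i k))) + \<alpha> k * (norm (D i k))\<^sup>2)
          \<longlonglongrightarrow> 2 * ((f i xx + mustar \<bullet> g xx) - (f i xstar + mustar \<bullet> g xstar)) + 0"
        by (intro tendsto_intros isCont_tendsto_compose[OF gisc] isCont_tendsto_compose[OF fisc[OF i]]
            vx_lim[OF i] vmu_lim[OF i] aD_lim[OF i])
      then show "(\<lambda>k. 2 * ((f i xx + vmu i k \<bullet> g xx) - (f i (vx i k) + vmu i k \<bullet> g (vx i k))) + \<alpha> k * (norm (D i k))\<^sup>2)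
          \<longlonglongrightarrow> 2 * ((f i xx + mustar \<bullet> g xx) - (f i xstar + mustar \<bullet> g xstar))" by simp
    next
      have "(\<Sum>i<N. 2 * ((f i xx + mustar \<bullet> g xx) - (f i xstar + mustar \<bullet> g xstar)))
          = 2 * (L xx mustar - L xstar mustar)"
        unfolding L_def by (simp add: sum.distrib sum_subtractf sum_distrib_left[symmetric] algebra_simps)
      then show "(\<Sum>i<N. 2 * ((f i xx + mustar \<bullet> g xx) - (f i xstar + mustar \<bullet> g xstar))) < 0"
        using lt by simp
    qed (use alpha_pos alpha_not_summable in auto)
  qed
  show ?thesis using part1 part2 by blast
qed

end
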